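(* Let $0<\Delta<1$, let $\mathcal{X}_\Delta=\{X\in\mathcal{X}:\mu_X(\{x\})<\Delta\text{ for all }x\in X\}$, and define $r_\Delta\colon\mathcal{X}_\Delta\to\mathbb{R}_+$ by $r_\Delta(X)=\int_0^{(\Delta+1)/2}\mathrm{diam}(X;s)\,ds$. Then $r_\Delta$ is continuous on $\mathcal{X}_\Delta$ with respect to the box topology.
   Context: mm-spaces are triples $(X,d_X,\mu_X)$ with $(X,d_X)$ complete separable metric and $\mu_X$ a Borel probability measure, with $X=\operatorname{supp}\mu_X$. $\mathcal{X}$ is the set of their isomorphism classes under measure-preserving isometries of supports. Box distance: $\square(X,Y)$ is the infimum of $\varepsilon\ge0$ such that there exist Borel maps $\varphi,\psi$ from $[0,1)$ pushing Lebesgue measure to $\mu_X,\mu_Y$ and a Borel $I_0$ of measure $\ge1-\varepsilon$ with $|d_X(\varphi(s),\varphi(t))-d_Y(\psi(s),\psi(t))|\le\varepsilon$ on $I_0$. It induces the box topology. Partial diameter: $\mathrm{diam}(X;\alpha)=\inf\{\mathrm{diam}A: A\subset X\text{ Borel},\ \mu_X(A)\ge\alpha\}$. For $X\in\mathcal{X}_\Delta$ one has $0<r_\Delta(X)<\infty$. *)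

theory Defs
  imports "HOL-Probability.Probability"
begin

definition borel_of :: "'a topology \<Rightarrow> 'a measure" where
  "borel_of T = sigma (topspace T) {U. openin T U}"

text \<open>An mm-space is represented by a pair (d, mu): the underlying set is space mu,
  d is the metric and mu the Borel probability measure.\<close>
type_synonym 'a mmspace = "('a \<Rightarrow> 'a \<Rightarrow> real) \<times> 'a measure"

definition mm_space :: "'a mmspace \<Rightarrow> bool" where
  "mm_space X \<longleftrightarrow> (case X of (d, \<mu>) \<Rightarrow>
     Metric_space (space \<mu>) d \<and>
     Metric_space.mcomplete (space \<mu>) d \<and>
     separable_space (Metric_space.mtopology (space \<mu>) d) \<and>
     sets \<mu> = sets (borel_of (Metric_space.mtopology (space \<mu>) d)) \<and>
     prob_space \<mu> \<and>
     \<comment> \<open>the support of mu is the whole space\<close>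
     (\<forall>x\<in>space \<mu>. \<forall>r>0. emeasure \<mu> (Metric_space.mball (space \<mu>) d x r) > 0))"

definition unit_lebesgue :: "real measure" where
  "unit_lebesgue = restrict_space lborel {0..<1}"

definition parameter :: "'a mmspace \<Rightarrow> (real \<Rightarrow> 'a) \<Rightarrow> bool" where
  "parameter X \<phi> \<longleftrightarrow> \<phi> \<in> measurable unit_lebesgue (snd X) \<and>
      distr unit_lebesgue (snd X) \<phi> = snd X"

definition box_dist :: "'a mmspace \<Rightarrow> 'b mmspace \<Rightarrow> real" where
  "box_dist X Y = Inf {\<epsilon>. \<epsilon> \<ge> 0 \<and> (\<exists>\<phi> \<psi> I0. parameter X \<phi> \<and> parameter Y \<psi> \<and>
       I0 \<in> sets unit_lebesgue \<and> measure unit_lebesgue I0 \<ge> 1 - \<epsilon> \<and>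
       (\<forall>s\<in>I0. \<forall>t\<in>I0. \<bar>fst X (\<phi> s) (\<phi> t) - fst Y (\<psi> s) (\<psi> t)\<bar> \<le> \<epsilon>))}"

definition mm_diam :: "'a mmspace \<Rightarrow> 'a set \<Rightarrow> ereal" where
  "mm_diam X A = (if A = {} then 0 else (SUP p\<in>A \<times> A. ereal (fst X (fst p) (snd p))))"

definition partial_diam :: "'a mmspace \<Rightarrow> real \<Rightarrow> ereal" where
  "partial_diam X \<alpha> = (INF A\<in>{A. A \<in> sets (snd X) \<and> measure (snd X) A \<ge> \<alpha>}. mm_diam X A)"

definition mm_space_Delta :: "real \<Rightarrow> 'a mmspace \<Rightarrow> bool" where
  "mm_space_Delta \<Delta> X \<longleftrightarrow> mm_space X \<and> (\<forall>x\<in>space (snd X). measure (snd X) {x} < \<Delta>)"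

definition r_Delta :: "real \<Rightarrow> 'a mmspace \<Rightarrow> real" where
  "r_Delta \<Delta> X = (LBINT s=0..(\<Delta> + 1) / 2. real_of_ereal (partial_diam X s))"

end

theory Submission
  imports Defs
begin


lemma space_UL[simp]: "space unit_lebesgue = {0..<1}"
  by (simp add: unit_lebesgue_def space_restrict_space)

lemma sets_UL: "A \<in> sets unit_lebesgue \<longleftrightarrow> A \<subseteq> {0..<1} \<and> A \<in> sets borel"
  unfolding unit_lebesgue_def by (subst sets_restrict_space_iff) auto

lemma emeasure_UL: "A \<subseteq> {0..<1} \<Longrightarrow> A \<in> sets borel \<Longrightarrow> emeasure unit_lebesgue A = emeasure lborel A"
  unfolding unit_lebesgue_def by (subst emeasure_restrict_space) auto

lemma prob_space_UL: "prob_space unit_lebesgue"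
  by (rule prob_spaceI) (simp add: emeasure_UL)

locale mmsp = Metric_space M d + prob_space \<mu> for M :: "'a set" and d and \<mu> :: "'a measure" +
  assumes spaceM[simp]: "space \<mu> = M"
  and setsM: "sets \<mu> = sets (borel_of mtopology)"
  and compl: "mcomplete"
  and sep: "separable_space mtopology"

lemma mm_space_mmsp: "mm_space (d, \<mu>) \<Longrightarrow> mmsp (space \<mu>) d \<mu>"
proof -
  assume "mm_space (d, \<mu>)"
  then have H: "Metric_space (space \<mu>) d \<and>
     Metric_space.mcomplete (space \<mu>) d \<and>
     separable_space (Metric_space.mtopology (space \<mu>) d) \<and>
     sets \<mu> = sets (borel_of (Metric_space.mtopology (space \<mu>) d)) \<and>
     prob_space \<mu>" by (simp add: mm_space_def)
  then show ?thesis unfolding mmsp_def mmsp_axioms_def by blast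
qed

context mmsp begin

lemma setsM': "sets \<mu> = sigma_sets M {U. openin mtopology U}"
proof -
  have "{U. openin mtopology U} \<subseteq> Pow M" using openin_subset[of mtopology] by auto
  then show ?thesis unfolding setsM borel_of_def by (simp add: sets_measure_of)
qed

lemma open_sets: "openin mtopology U \<Longrightarrow> U \<in> sets \<mu>"
  unfolding setsM' by auto

lemma closed_sets: "closedin mtopology C \<Longrightarrow> C \<in> sets \<mu>"
proof -
  assume C: "closedin mtopology C"
  then have "openin mtopology (M - C)" by (simp add: closedin_def)
  then have "M - C \<in> sets \<mu>" by (rule open_sets)
  then have "space \<mu> - (M - C) \<in> sets \<mu>" by (metis sets.compl_sets)
  moreover have "space \<mu> - (M - C) = C" using closedin_subset[OF C] by auto
  ultimately show ?thesis by simp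
qed

lemma M_sets[simp]: "M \<in> sets \<mu>" using sets.top[of \<mu>] by simp

lemma M_ne: "M \<noteq> {}" using not_empty spaceM by auto

definition aseq :: "nat \<Rightarrow> 'a" where
  "aseq = (SOME a. range a \<subseteq> M \<and> (\<forall>x\<in>M. \<forall>r>0. \<exists>i. d x (a i) < r))"

lemma aseq_ex: "\<exists>a::nat\<Rightarrow>'a. range a \<subseteq> M \<and> (\<forall>x\<in>M. \<forall>r>0. \<exists>i. d x (a i) < r)"
proof -
  obtain C where C: "countable C" "C \<subseteq> M" "mtopology closure_of C = M"
    using sep unfolding separable_space_def by auto
  have "C \<noteq> {}" using C(3) M_ne by auto
  define a where "a = from_nat_into C"
  have ra: "range a = C" using range_from_nat_into[OF \<open>C \<noteq> {}\<close> C(1)] a_def by simp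
  have h1: "\<forall>x\<in>M. \<forall>r>0. \<exists>i. d x (a i) < r"
  proof (intro ballI allI impI)
    fix x r assume "x \<in> M" "(0::real) < r"
    then have "x \<in> mtopology closure_of C" using C(3) by simp
    then obtain y where "y \<in> C" "y \<in> mball x r" using \<open>0 < r\<close> unfolding metric_closure_of by auto
    then show "\<exists>i. d x (a i) < r" using ra by auto
  qed
  have h2: "range a \<subseteq> M" using ra C(2) by simp
  show ?thesis by (rule exI[where x=a], rule conjI[OF h2 h1])
qed

lemma aseq_prop: "range aseq \<subseteq> M \<and> (\<forall>x\<in>M. \<forall>r>0. \<exists>i. d x (aseq i) < r)"
  unfolding aseq_def by (rule someI_ex[OF aseq_ex])

lemma aseq: "range aseq \<subseteq> M" "x \<in> M \<Longrightarrow> r > 0 \<Longrightarrow> \<exists>i. d x (aseq i) < r"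
  using aseq_prop by blast+

lemma aseq_in[simp]: "aseq i \<in> M" using aseq(1) by auto

definition rr :: "nat \<Rightarrow> real" where "rr k = (1/2)^k"

lemma rr_pos[simp]: "rr k > 0" by (simp add: rr_def)

definition ix :: "nat \<Rightarrow> 'a \<Rightarrow> nat" where "ix k x = (LEAST i. d x (aseq i) < rr k)"

lemma ix: "x \<in> M \<Longrightarrow> d x (aseq (ix k x)) < rr k"
  unfolding ix_def by (rule LeastI_ex) (use aseq(2) in auto)

lemma ix_eq: "x \<in> M \<Longrightarrow> ix k x = j \<longleftrightarrow> d x (aseq j) < rr k \<and> (\<forall>i<j. \<not> d x (aseq i) < rr k)"
proof
  assume x: "x \<in> M" and "ix k x = j"
  then show "d x (aseq j) < rr k \<and> (\<forall>i<j. \<not> d x (aseq i) < rr k)"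
    using ix[OF x, of k] not_less_Least[of _ "\<lambda>i. d x (aseq i) < rr k"] unfolding ix_def by blast
next
  assume H: "d x (aseq j) < rr k \<and> (\<forall>i<j. \<not> d x (aseq i) < rr k)"
  show "ix k x = j" unfolding ix_def
  proof (rule Least_equality)
    show "d x (aseq j) < rr k" using H by blast
    show "\<And>y. d x (aseq y) < rr k \<Longrightarrow> j \<le> y" using H leI by blast
  qed
qed

definition rcode :: "nat \<Rightarrow> 'a \<Rightarrow> nat list" where
  "rcode k x = map (\<lambda>m. ix m x) (rev [0..<k])"

lemma rcode_0[simp]: "rcode 0 x = []" and rcode_Suc[simp]: "rcode (Suc k) x = ix k x # rcode k x"
  by (auto simp: rcode_def)

lemma length_rcode[simp]: "length (rcode k x) = k"
  by (simp add: rcode_def)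

definition cell :: "nat list \<Rightarrow> 'a set" where
  "cell c = {x\<in>M. rcode (length c) x = c}"

lemma cell_Nil[simp]: "cell [] = M" by (simp add: cell_def)

lemma cell_Cons: "cell (j # c) = {x \<in> cell c. ix (length c) x = j}"
  by (auto simp: cell_def)

lemma ixset_sets: "{x\<in>M. ix k x = j} \<in> sets \<mu>"
proof -
  have "{x\<in>M. ix k x = j} = mball (aseq j) (rr k) \<inter> (M - (\<Union>i\<in>{..<j}. mball (aseq i) (rr k)))"
  proof (rule set_eqI)
    fix x show "x \<in> {x\<in>M. ix k x = j} \<longleftrightarrow> x \<in> mball (aseq j) (rr k) \<inter> (M - (\<Union>i\<in>{..<j}. mball (aseq i) (rr k)))"
    proof (cases "x \<in> M")
      case True
      then show ?thesis using ix_eq[OF True, of k j] by (auto simp: commute)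
    qed auto
  qed
  also have "\<dots> \<in> sets \<mu>"
    using open_sets[OF openin_mball] by (intro sets.Int sets.Diff sets.finite_UN) auto
  finally show ?thesis .
qed

lemma cell_sets[measurable]: "cell c \<in> sets \<mu>"
proof (induction c)
  case Nil then show ?case using spaceM by simp
next
  case (Cons j c)
  have eq: "cell (j # c) = cell c \<inter> {x\<in>M. ix (length c) x = j}" by (auto simp: cell_Cons cell_def)
  show ?case by (subst eq) (rule sets.Int[OF Cons.IH ixset_sets])
qed

lemma in_cell_rcode: "x \<in> M \<Longrightarrow> x \<in> cell (rcode k x)"
  by (simp add: cell_def)

definition mc :: "nat list \<Rightarrow> real" where "mc c = measure \<mu> (cell c)"

lemma mc_nonneg: "mc c \<ge> 0" by (simp add: mc_def)

lemma mc_Nil[simp]: "mc [] = 1" using prob_space sets.top[of \<mu>] by (simp add: mc_def)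

lemma mc_sums: "(\<lambda>j. mc (j # c)) sums mc c"
proof -
  have "(\<lambda>j. measure \<mu> (cell (j # c))) sums measure \<mu> (\<Union>j. cell (j # c))"
  proof (rule finite_measure_UNION)
    show "range (\<lambda>j. cell (j # c)) \<subseteq> sets \<mu>" using cell_sets by blast
    show "disjoint_family (\<lambda>j. cell (j # c))" by (auto simp: disjoint_family_on_def cell_Cons)
  qed
  moreover have "(\<Union>j. cell (j # c)) = cell c" by (auto simp: cell_Cons)
  ultimately show ?thesis by (simp add: mc_def)
qed

end


lemma least_iff:
  fixes S :: "nat \<Rightarrow> real"
  assumes mono: "\<And>m n. m \<le> n \<Longrightarrow> S m \<le> S n" and t0: "S 0 \<le> t" and ex: "\<exists>j. t < S (Suc j)"
  shows "(LEAST j. t < S (Suc j)) = j \<longleftrightarrow> S j \<le> t \<and> t < S (Suc j)"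
proof
  assume H: "(LEAST j. t < S (Suc j)) = j"
  have 1: "t < S (Suc j)" using LeastI_ex[OF ex] H by simp
  have "S j \<le> t"
  proof (cases j)
    case 0 then show ?thesis using t0 by simp
  next
    case (Suc j')
    then have "\<not> t < S (Suc j')" using not_less_Least[of j' "\<lambda>j. t < S (Suc j)"] H by auto
    then show ?thesis using Suc by simp
  qed
  then show "S j \<le> t \<and> t < S (Suc j)" using 1 by simp
next
  assume H: "S j \<le> t \<and> t < S (Suc j)"
  show "(LEAST j. t < S (Suc j)) = j"
  proof (rule Least_equality)
    show "t < S (Suc j)" using H by simp
    fix y assume "t < S (Suc y)"
    show "j \<le> y"
    proof (rule ccontr)
      assume "\<not> j \<le> y" then have "Suc y \<le> j" by simp
      then have "S (Suc y) \<le> S j" by (rule mono)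
      then show False using H \<open>t < S (Suc y)\<close> by simp
    qed
  qed
qed

context mmsp begin

primrec Lc :: "nat list \<Rightarrow> real" where
  "Lc [] = 0" | "Lc (j # c) = Lc c + (\<Sum>i<j. mc (i # c))"

lemma summable_mc: "summable (\<lambda>j. mc (j # c))" using mc_sums sums_summable by blast

lemma psum_le: "(\<Sum>i<n. mc (i # c)) \<le> mc c"
  using sum_le_suminf[OF summable_mc, of "{..<n}"] mc_nonneg sums_unique[OF mc_sums, of c] by auto

lemma psum_nonneg: "0 \<le> (\<Sum>i<n. mc (i # c))"
  using mc_nonneg by (simp add: sum_nonneg)

lemma Lc_bounds: "0 \<le> Lc c \<and> Lc c + mc c \<le> 1"
proof (induction c)
  case Nil show ?case by simp
next
  case (Cons j c)
  have "Lc (j#c) + mc (j#c) = Lc c + (\<Sum>i<Suc j. mc (i # c))" by simp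
  also have "\<dots> \<le> Lc c + mc c" using psum_le[where n="Suc j" and c=c] by linarith
  finally show ?case using Cons psum_nonneg[where n=j and c=c] by simp
qed

primrec cc :: "real \<Rightarrow> nat \<Rightarrow> nat list" where
  "cc t 0 = []"
| "cc t (Suc k) = (LEAST j. t < Lc (cc t k) + (\<Sum>i<Suc j. mc (i # cc t k))) # cc t k"

lemma length_cc[simp]: "length (cc t k) = k"
  by (induction k) auto

lemma cc_set: "{t\<in>{0..<1}. cc t k = c} = (if length c = k then {Lc c ..< Lc c + mc c} else {})"
proof (induction k arbitrary: c)
  case 0
  then show ?case by (cases c) auto
next
  case (Suc k)
  show ?case
  proof (cases c)
    case Nil
    then show ?thesis by auto
  next
    case (Cons j c0)
    define S where "S n = Lc c0 + (\<Sum>i<n. mc (i # c0))" for n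
    have Smono: "S m \<le> S n" if "m \<le> n" for m n
      unfolding S_def using that mc_nonneg by (simp add: sum_mono2)
    have S0: "S 0 = Lc c0" by (simp add: S_def)
    have Slim: "S \<longlonglongrightarrow> Lc c0 + mc c0"
      unfolding S_def using mc_sums[of c0] unfolding sums_def by (intro tendsto_add) auto
    have SLc: "S j = Lc (j # c0)" "S (Suc j) = Lc (j # c0) + mc (j # c0)"
      by (simp_all add: S_def)
    have SLe: "Lc c0 \<le> S j" "S (Suc j) \<le> Lc c0 + mc c0"
      using psum_nonneg[where n=j and c=c0] psum_le[where n="Suc j" and c=c0] by (auto simp: S_def)
    have eq1: "{t\<in>{0..<1}. cc t (Suc k) = c} =
       {t \<in> {t\<in>{0..<1}. cc t k = c0}. (LEAST j. t < S (Suc j)) = j}"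
    proof (rule set_eqI)
      fix t
      have "cc t (Suc k) = c \<longleftrightarrow> cc t k = c0 \<and> (LEAST j. t < S (Suc j)) = j"
        by (cases "cc t k = c0") (simp_all add: S_def Cons)
      then show "t \<in> {t\<in>{0..<1}. cc t (Suc k) = c} \<longleftrightarrow> t \<in> {t \<in> {t\<in>{0..<1}. cc t k = c0}. (LEAST j. t < S (Suc j)) = j}"
        by blast
    qed
    show ?thesis
    proof (cases "length c0 = k")
      case False
      then show ?thesis unfolding eq1 Suc.IH using Cons by auto
    next
      case True
      have "{t \<in> {Lc c0 ..< Lc c0 + mc c0}. (LEAST j. t < S (Suc j)) = j} = {S j ..< S (Suc j)}"
      proof (rule set_eqI)
        fix t
        show "t \<in> {t \<in> {Lc c0 ..< Lc c0 + mc c0}. (LEAST j. t < S (Suc j)) = j} \<longleftrightarrow> t \<in> {S j ..< S (Suc j)}"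
        proof (cases "t \<in> {Lc c0 ..< Lc c0 + mc c0}")
          case True
          then have "t < Lc c0 + mc c0" by simp
          then have "eventually (\<lambda>n. t < S n) sequentially"
            using Slim order_tendstoD(1) by blast
          then obtain n where "t < S n" by (meson eventually_sequentially order.refl)
          then have "t < S (Suc n)" using Smono[of n "Suc n"] by simp
          then have ex: "\<exists>j. t < S (Suc j)" by blast
          show ?thesis using least_iff[OF Smono _ ex] True S0 by auto
        next
          case False
          then show ?thesis using SLe by auto
        qed
      qed
      then show ?thesis unfolding eq1 Suc.IH using Cons True SLc by simp
    qed
  qed
qed

lemma cc_in: "t \<in> {0..<1} \<Longrightarrow> Lc (cc t k) \<le> t \<and> t < Lc (cc t k) + mc (cc t k)"
proof -
  assume t: "t \<in> {0..<1}"
  then have "t \<in> {s\<in>{0..<1}. cc s k = cc t k}" by simp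
  then have "t \<in> (if length (cc t k) = k then {Lc (cc t k)..<Lc (cc t k) + mc (cc t k)} else {})"
    by (simp only: cc_set[where k=k and c="cc t k"])
  then show ?thesis by simp
qed

lemma mc_cc_pos: assumes "t \<in> {0..<1}" shows "mc (cc t k) > 0"
  using cc_in[OF assms, of k] by linarith

lemma cell_cc_ne: assumes "t \<in> {0..<1}" shows "cell (cc t k) \<noteq> {}"
proof
  assume "cell (cc t k) = {}"
  then have "mc (cc t k) = 0" unfolding mc_def by simp
  then show False using mc_cc_pos[OF assms, of k] by simp
qed

lemma cc_preimage: "(\<lambda>t. cc t k) -` {c} \<inter> space unit_lebesgue = (if length c = k then {Lc c ..< Lc c + mc c} else {})"
proof -
  have "(\<lambda>t. cc t k) -` {c} \<inter> space unit_lebesgue = {t\<in>{0..<1}. cc t k = c}" by auto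
  also have "\<dots> = (if length c = k then {Lc c ..< Lc c + mc c} else {})" by (rule cc_set)
  finally show ?thesis .
qed

lemma cc_meas: "(\<lambda>t. cc t k) \<in> measurable unit_lebesgue (count_space UNIV)"
proof (subst measurable_count_space_eq2_countable, safe)
  fix c
  show "(\<lambda>t. cc t k) -` {c} \<inter> space unit_lebesgue \<in> sets unit_lebesgue"
  proof (cases "length c = k")
    case True
    have "{Lc c ..< Lc c + mc c} \<subseteq> {0..<1}" using Lc_bounds[of c] by auto
    then show ?thesis unfolding cc_preimage sets_UL using True by simp
  next
    case False
    then show ?thesis unfolding cc_preimage by simp
  qed
qed simp

lemma rcode_preimage: "rcode k -` {c} \<inter> space \<mu> = (if length c = k then cell c else {})"
  by (auto simp: cell_def)

lemma rcode_meas: "rcode k \<in> measurable \<mu> (count_space UNIV)"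
proof (subst measurable_count_space_eq2_countable, safe)
  fix c
  show "rcode k -` {c} \<inter> space \<mu> \<in> sets \<mu>"
    unfolding rcode_preimage by auto
qed simp

lemma distr_code_eq:
  "distr unit_lebesgue (count_space UNIV) (\<lambda>t. cc t k) = distr \<mu> (count_space UNIV) (rcode k)"
proof (rule measure_eqI_countable)
  show "countable (UNIV :: nat list set)" by simp
  fix c :: "nat list"
  have "emeasure unit_lebesgue ((\<lambda>t. cc t k) -` {c} \<inter> space unit_lebesgue) = emeasure \<mu> (rcode k -` {c} \<inter> space \<mu>)"
  proof (cases "length c = k")
    case True
    have "emeasure unit_lebesgue {Lc c ..< Lc c + mc c} = emeasure lborel {Lc c ..< Lc c + mc c}"
      using Lc_bounds[of c] by (intro emeasure_UL) auto
    also have "\<dots> = ennreal (mc c)" using mc_nonneg[of c] by simp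
    also have "\<dots> = emeasure \<mu> (cell c)" unfolding mc_def by (simp add: emeasure_eq_measure)
    finally show ?thesis unfolding cc_preimage rcode_preimage using True by simp
  next
    case False
    then show ?thesis unfolding cc_preimage rcode_preimage by simp
  qed
  then show "emeasure (distr unit_lebesgue (count_space UNIV) (\<lambda>t. cc t k)) {c} = emeasure (distr \<mu> (count_space UNIV) (rcode k)) {c}"
    by (simp add: emeasure_distr cc_meas rcode_meas)
qed auto

lemma law_eq: "emeasure unit_lebesgue {t\<in>{0..<1}. cc t k \<in> S} = emeasure \<mu> {x\<in>M. rcode k x \<in> S}"
proof -
  have "emeasure (distr unit_lebesgue (count_space UNIV) (\<lambda>t. cc t k)) S = emeasure (distr \<mu> (count_space UNIV) (rcode k)) S"
    by (simp add: distr_code_eq)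
  moreover have "(\<lambda>t. cc t k) -` S \<inter> space unit_lebesgue = {t\<in>{0..<1}. cc t k \<in> S}" by auto
  moreover have "rcode k -` S \<inter> space \<mu> = {x\<in>M. rcode k x \<in> S}" by auto
  ultimately show ?thesis by (simp add: emeasure_distr cc_meas rcode_meas)
qed

end


context mmsp begin

lemma rr_Suc: "rr (Suc k) = rr k / 2" by (simp add: rr_def)

lemma rr_mono: "k \<le> n \<Longrightarrow> rr n \<le> rr k"
  unfolding rr_def by (rule power_decreasing) auto

lemma rr_small: "e > 0 \<Longrightarrow> \<exists>k. rr k < e"
  unfolding rr_def by (rule real_arch_pow_inv) auto

lemma rr_lim: "rr \<longlonglongrightarrow> 0"
  unfolding rr_def[abs_def] by (rule LIMSEQ_realpow_zero) auto

definition jj :: "real \<Rightarrow> nat \<Rightarrow> nat" where "jj t k = hd (cc t (Suc k))"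
definition pp :: "real \<Rightarrow> nat \<Rightarrow> 'a" where "pp t k = aseq (jj t k)"

lemma cc_Suc_eq: "cc t (Suc k) = jj t k # cc t k" by (simp add: jj_def)

declare cc.simps(2)[simp del]

lemma pp_in[simp]: "pp t k \<in> M" by (simp add: pp_def)

lemma cell_sub_M: "cell c \<subseteq> M" by (auto simp: cell_def)

lemma cell_mono_cc: assumes "k \<le> n" shows "cell (cc t n) \<subseteq> cell (cc t k)"
  using assms
proof (induction n rule: dec_induct)
  case base then show ?case by simp
next
  case (step n)
  have "cell (cc t (Suc n)) \<subseteq> cell (cc t n)" by (auto simp: cc_Suc_eq cell_Cons)
  then show ?case using step.IH by blast
qed

lemma cell_cc_ball: assumes "x \<in> cell (cc t (Suc k))" shows "d x (pp t k) < rr k"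
proof -
  have "x \<in> cell (cc t k)" "ix k x = jj t k"
    using assms by (auto simp: cc_Suc_eq cell_Cons)
  moreover have "x \<in> M" using assms cell_sub_M by blast
  ultimately show ?thesis using ix[of x k] by (simp add: pp_def)
qed

lemma pp_close: assumes t: "t \<in> {0..<1}" and "k \<le> n" shows "d (pp t k) (pp t n) < rr k + rr n"
proof -
  obtain x where x: "x \<in> cell (cc t (Suc n))" using cell_cc_ne[OF t] by blast
  have x2: "x \<in> cell (cc t (Suc k))" using x cell_mono_cc[of "Suc k" "Suc n" t] assms(2) by auto
  have xM: "x \<in> M" using x cell_sub_M by blast
  have "d (pp t k) (pp t n) \<le> d (pp t k) x + d x (pp t n)" using xM by (intro triangle) auto
  also have "\<dots> = d x (pp t k) + d x (pp t n)" by (simp add: commute)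
  also have "\<dots> < rr k + rr n" using cell_cc_ball[OF x] cell_cc_ball[OF x2] by simp
  finally show ?thesis .
qed

lemma pp_cauchy: assumes t: "t \<in> {0..<1}" shows "MCauchy (pp t)"
  unfolding MCauchy_def
proof (intro conjI allI impI)
  show "range (pp t) \<subseteq> M" by auto
  fix e :: real assume "e > 0"
  then obtain N where N: "rr N < e / 2" using rr_small[of "e/2"] by auto
  have "d (pp t n) (pp t n') < e" if "N \<le> n" "N \<le> n'" for n n'
  proof (cases "n \<le> n'")
    case True
    have "d (pp t n) (pp t n') < rr n + rr n'" by (rule pp_close[OF t True])
    also have "\<dots> \<le> rr N + rr N" using rr_mono[OF that(1)] rr_mono[OF that(2)] by linarith
    finally show ?thesis using N by simp
  next
    case False
    have "d (pp t n') (pp t n) < rr n' + rr n" using False by (intro pp_close[OF t]) simp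
    also have "\<dots> \<le> rr N + rr N" using rr_mono[OF that(1)] rr_mono[OF that(2)] by linarith
    finally show ?thesis using N by (simp add: commute)
  qed
  then show "\<exists>N. \<forall>n n'. N \<le> n \<longrightarrow> N \<le> n' \<longrightarrow> d (pp t n) (pp t n') < e" by blast
qed

definition phi :: "real \<Rightarrow> 'a" where
  "phi t = (if t \<in> {0..<1} then (SOME x. limitin mtopology (pp t) x sequentially) else aseq 0)"

lemma phi_lim: assumes t: "t \<in> {0..<1}" shows "limitin mtopology (pp t) (phi t) sequentially"
proof -
  have "\<exists>x. limitin mtopology (pp t) x sequentially"
    using compl pp_cauchy[OF t] unfolding mcomplete_def by blast
  then have "limitin mtopology (pp t) (SOME x. limitin mtopology (pp t) x sequentially) sequentially"
    by (rule someI_ex)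
  then show ?thesis unfolding phi_def using t by simp
qed

lemma phi_in[simp]: "phi t \<in> M"
proof (cases "t \<in> {0..<1}")
  case True
  then show ?thesis using phi_lim[OF True] limitin_metric by blast
next
  case False
  then have "phi t = aseq 0" unfolding phi_def by (simp only: if_False)
  then show ?thesis by simp
qed

lemma phi_close: assumes t: "t \<in> {0..<1}" shows "d (pp t k) (phi t) \<le> rr k"
proof (rule field_le_epsilon)
  fix e :: real assume e: "e > 0"
  have ev1: "eventually (\<lambda>n. d (pp t n) (phi t) < e / 2) sequentially"
  proof -
    have "\<forall>\<epsilon>>0. eventually (\<lambda>n. pp t n \<in> M \<and> d (pp t n) (phi t) < \<epsilon>) sequentially"
      using phi_lim[OF t] unfolding limitin_metric by blast
    moreover have "e / 2 > 0" using e by simp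
    ultimately have "eventually (\<lambda>n. pp t n \<in> M \<and> d (pp t n) (phi t) < e / 2) sequentially"
      by blast
    then show ?thesis by (rule eventually_mono) simp
  qed
  have ev2: "eventually (\<lambda>n. rr n < e / 2) sequentially"
    by (rule order_tendstoD(2)[OF rr_lim]) (use e in simp)
  have ev3: "eventually (\<lambda>n. k \<le> n) sequentially" by (rule eventually_ge_at_top)
  obtain n where n: "d (pp t n) (phi t) < e / 2" "rr n < e / 2" "k \<le> n"
    using eventually_happens'[OF _ eventually_conj[OF ev1 eventually_conj[OF ev2 ev3]]] by auto
  have "d (pp t k) (phi t) \<le> d (pp t k) (pp t n) + d (pp t n) (phi t)"
    by (intro triangle) auto
  also have "\<dots> < rr k + rr n + e / 2" using pp_close[OF t n(3)] n(1) by simp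
  also have "\<dots> < rr k + e" using n(2) by simp
  finally show "d (pp t k) (phi t) \<le> rr k + e" by simp
qed

lemma cell_near_phi: assumes t: "t \<in> {0..<1}" and x: "x \<in> cell (cc t (Suc k))"
  shows "d x (phi t) < 2 * rr k"
proof -
  have xM: "x \<in> M" using x cell_sub_M by blast
  have "d x (phi t) \<le> d x (pp t k) + d (pp t k) (phi t)" using xM by (intro triangle) auto
  also have "\<dots> < rr k + rr k" using cell_cc_ball[OF x] phi_close[OF t, of k] by simp
  finally show ?thesis by simp
qed

lemma phi_meas: "phi \<in> measurable unit_lebesgue \<mu>"
proof (rule measurable_sigma_sets[OF setsM'])
  show "{U. openin mtopology U} \<subseteq> Pow M" using openin_subset[of mtopology] by auto
  show "phi \<in> space unit_lebesgue \<rightarrow> M" by simp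
  fix U assume "U \<in> {U. openin mtopology U}"
  then have U: "openin mtopology U" by simp
  define S where "S k = {c. c \<noteq> [] \<and> mball (aseq (hd c)) (2 * rr k) \<subseteq> U}" for k
  have eq: "phi -` U \<inter> space unit_lebesgue = (\<Union>k. (\<lambda>t. cc t (Suc k)) -` S k \<inter> space unit_lebesgue)"
  proof (rule set_eqI)
    fix t
    show "t \<in> phi -` U \<inter> space unit_lebesgue \<longleftrightarrow> t \<in> (\<Union>k. (\<lambda>t. cc t (Suc k)) -` S k \<inter> space unit_lebesgue)"
    proof (cases "t \<in> {0..<1}")
      case t: True
      show ?thesis
      proof
        assume "t \<in> phi -` U \<inter> space unit_lebesgue"
        then have "phi t \<in> U" by simp
        then obtain r where r: "r > 0" "mball (phi t) r \<subseteq> U" using U unfolding openin_mtopology by blast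
        obtain k where k: "rr k < r / 3" using rr_small[of "r/3"] r by auto
        have "mball (pp t k) (2 * rr k) \<subseteq> mball (phi t) r"
          using phi_close[OF t, of k] k by (intro mball_subset) auto
        then have "cc t (Suc k) \<in> S k" using r unfolding S_def cc_Suc_eq pp_def by auto
        then show "t \<in> (\<Union>k. (\<lambda>t. cc t (Suc k)) -` S k \<inter> space unit_lebesgue)" using t by auto
      next
        assume "t \<in> (\<Union>k. (\<lambda>t. cc t (Suc k)) -` S k \<inter> space unit_lebesgue)"
        then obtain k where "cc t (Suc k) \<in> S k" by auto
        then have sub: "mball (pp t k) (2 * rr k) \<subseteq> U" unfolding S_def cc_Suc_eq pp_def by auto
        have "d (pp t k) (phi t) < 2 * rr k" using phi_close[OF t, of k] rr_pos[of k] by linarith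
        then have "phi t \<in> mball (pp t k) (2 * rr k)" by simp
        then show "t \<in> phi -` U \<inter> space unit_lebesgue" using sub t by auto
      qed
    next
      case False
      then show ?thesis by auto
    qed
  qed
  show "phi -` U \<inter> space unit_lebesgue \<in> sets unit_lebesgue"
    unfolding eq using measurable_sets[OF cc_meas] by (intro sets.countable_UN) auto
qed

end


interpretation UL: prob_space unit_lebesgue by (rule prob_space_UL)

context mmsp begin

definition nbhd :: "'a set \<Rightarrow> nat \<Rightarrow> 'a set" where
  "nbhd F k = {x\<in>M. \<exists>y\<in>F. d x y < 2 * rr k}"

lemma nbhd_open: assumes "F \<subseteq> M" shows "openin mtopology (nbhd F k)"
proof -
  have "nbhd F k = \<Union>((\<lambda>y. mball y (2 * rr k)) ` F)"
  proof (rule set_eqI)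
    fix x
    have "x \<in> nbhd F k \<longleftrightarrow> (\<exists>y\<in>F. x \<in> mball y (2 * rr k))"
      using assms unfolding nbhd_def in_mball by (auto simp: commute[of x])
    then show "x \<in> nbhd F k \<longleftrightarrow> x \<in> \<Union>((\<lambda>y. mball y (2 * rr k)) ` F)" by blast
  qed
  then show ?thesis by (auto intro!: openin_Union)
qed

lemma nbhd_sets: "F \<subseteq> M \<Longrightarrow> nbhd F k \<in> sets \<mu>"
  using open_sets[OF nbhd_open] by blast

lemma nbhd_decseq: "antimono_on UNIV (nbhd F)"
  unfolding monotone_on_def nbhd_def
proof (intro ballI impI subsetI)
  fix k n x assume kn: "k \<le> n" and x: "x \<in> {x\<in>M. \<exists>y\<in>F. d x y < 2 * rr n}"
  have "rr n \<le> rr k" using rr_mono[OF kn] .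
  then show "x \<in> {x\<in>M. \<exists>y\<in>F. d x y < 2 * rr k}" using x by force
qed

lemma nbhd_Inter: assumes F: "closedin mtopology F" shows "(\<Inter>k. nbhd F k) = F"
proof
  have FM: "F \<subseteq> M" using closedin_subset[OF F] by simp
  show "F \<subseteq> (\<Inter>k. nbhd F k)"
  proof
    fix x assume "x \<in> F"
    then have "x \<in> M" using FM by auto
    then show "x \<in> (\<Inter>k. nbhd F k)" unfolding nbhd_def using \<open>x \<in> F\<close> rr_pos
      by (intro InterI) (auto intro!: bexI[where x=x])
  qed
  show "(\<Inter>k. nbhd F k) \<subseteq> F"
  proof
    fix x assume x: "x \<in> (\<Inter>k. nbhd F k)"
    then have xM: "x \<in> M" by (auto simp: nbhd_def)
    show "x \<in> F"
    proof (rule ccontr)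
      assume "x \<notin> F"
      then obtain r where r: "r > 0" "disjnt F (mball x r)"
        using F xM unfolding closedin_metric by blast
      obtain k where k: "rr k < r / 2" using rr_small[of "r/2"] r by auto
      have "x \<in> nbhd F k" using x by auto
      then obtain y where y: "y \<in> F" "d x y < 2 * rr k" by (auto simp: nbhd_def)
      then have "y \<in> mball x r" using xM FM k by auto
      then show False using r(2) y(1) by (auto simp: disjnt_def)
    qed
  qed
qed

definition PhiS :: "'a set \<Rightarrow> real set" where
  "PhiS A = phi -` A \<inter> space unit_lebesgue"

lemma PhiS_sets: "A \<in> sets \<mu> \<Longrightarrow> PhiS A \<in> sets unit_lebesgue"
  unfolding PhiS_def using measurable_sets[OF phi_meas] by blast

lemma cc_pre_sets: "{t\<in>{0..<1}. cc t k \<in> S} \<in> sets unit_lebesgue"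
proof -
  have "{t\<in>{0..<1}. cc t k \<in> S} = (\<lambda>t. cc t k) -` S \<inter> space unit_lebesgue" by auto
  then show ?thesis using measurable_sets[OF cc_meas, of S k] by simp
qed

lemma rcode_pre_sets: "{x\<in>M. rcode k x \<in> S} \<in> sets \<mu>"
proof -
  have "{x\<in>M. rcode k x \<in> S} = rcode k -` S \<inter> space \<mu>" by auto
  then show ?thesis using measurable_sets[OF rcode_meas, of S k] by simp
qed


lemma closed_le1: assumes F: "closedin mtopology F"
  shows "measure unit_lebesgue (PhiS F) \<le> measure \<mu> (nbhd F k)"
proof -
  have FM: "F \<subseteq> M" using closedin_subset[OF F] by simp
  define S1 where "S1 = {c. cell c \<subseteq> nbhd F k}"
  have "PhiS F \<subseteq> {t\<in>{0..<1}. cc t (Suc k) \<in> S1}"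
  proof
    fix t assume "t \<in> PhiS F"
    then have t: "t \<in> {0..<1}" and pF: "phi t \<in> F" by (auto simp: PhiS_def)
    have "cell (cc t (Suc k)) \<subseteq> nbhd F k"
    proof
      fix x assume x: "x \<in> cell (cc t (Suc k))"
      then have "x \<in> M" using cell_sub_M by blast
      then show "x \<in> nbhd F k" using cell_near_phi[OF t x] pF unfolding nbhd_def by blast
    qed
    then show "t \<in> {t\<in>{0..<1}. cc t (Suc k) \<in> S1}" using t by (simp add: S1_def)
  qed
  then have "emeasure unit_lebesgue (PhiS F) \<le> emeasure unit_lebesgue {t\<in>{0..<1}. cc t (Suc k) \<in> S1}"
    by (intro emeasure_mono cc_pre_sets)
  also have "\<dots> = emeasure \<mu> {x\<in>M. rcode (Suc k) x \<in> S1}" by (rule law_eq)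
  also have "\<dots> \<le> emeasure \<mu> (nbhd F k)"
  proof (intro emeasure_mono nbhd_sets FM subsetI)
    fix x assume "x \<in> {x\<in>M. rcode (Suc k) x \<in> S1}"
    then show "x \<in> nbhd F k" using in_cell_rcode[of x "Suc k"] by (auto simp: S1_def)
  qed
  finally show ?thesis
    using PhiS_sets[OF closed_sets[OF F]] nbhd_sets[OF FM]
    by (simp add: UL.emeasure_eq_measure emeasure_eq_measure)
qed

lemma closed_le2: assumes F: "closedin mtopology F"
  shows "measure \<mu> F \<le> measure unit_lebesgue (PhiS (nbhd F k))"
proof -
  have FM: "F \<subseteq> M" using closedin_subset[OF F] by simp
  define S2 where "S2 = {c. cell c \<inter> F \<noteq> {}}"
  have "emeasure \<mu> F \<le> emeasure \<mu> {x\<in>M. rcode (Suc k) x \<in> S2}"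
  proof (intro emeasure_mono rcode_pre_sets subsetI)
    fix x assume "x \<in> F"
    then show "x \<in> {x\<in>M. rcode (Suc k) x \<in> S2}"
      using FM in_cell_rcode[of x "Suc k"] by (auto simp: S2_def)
  qed
  also have "\<dots> = emeasure unit_lebesgue {t\<in>{0..<1}. cc t (Suc k) \<in> S2}" by (rule law_eq[symmetric])
  also have "\<dots> \<le> emeasure unit_lebesgue (PhiS (nbhd F k))"
  proof (intro emeasure_mono PhiS_sets nbhd_sets FM subsetI)
    fix t assume "t \<in> {t\<in>{0..<1}. cc t (Suc k) \<in> S2}"
    then have t: "t \<in> {0..<1}" and ne: "cell (cc t (Suc k)) \<inter> F \<noteq> {}" by (auto simp: S2_def)
    then obtain y where y: "y \<in> cell (cc t (Suc k))" "y \<in> F" by blast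
    have "d (phi t) y < 2 * rr k" using cell_near_phi[OF t y(1)] by (simp add: commute)
    then have "phi t \<in> nbhd F k" using y(2) unfolding nbhd_def by auto
    then show "t \<in> PhiS (nbhd F k)" using t by (simp add: PhiS_def)
  qed
  finally show ?thesis
    using PhiS_sets[OF nbhd_sets[OF FM]] closed_sets[OF F]
    by (simp add: UL.emeasure_eq_measure emeasure_eq_measure)
qed

lemma closed_eq: assumes F: "closedin mtopology F"
  shows "measure unit_lebesgue (PhiS F) = measure \<mu> F"
proof -
  have FM: "F \<subseteq> M" using closedin_subset[OF F] by simp
  have lim1: "(\<lambda>k. measure \<mu> (nbhd F k)) \<longlonglongrightarrow> measure \<mu> F"
  proof -
    have "(\<lambda>k. measure \<mu> (nbhd F k)) \<longlonglongrightarrow> measure \<mu> (\<Inter>k. nbhd F k)"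
      by (rule finite_Lim_measure_decseq) (auto intro: nbhd_sets[OF FM] nbhd_decseq)
    then show ?thesis using nbhd_Inter[OF F] by simp
  qed
  have lim2: "(\<lambda>k. measure unit_lebesgue (PhiS (nbhd F k))) \<longlonglongrightarrow> measure unit_lebesgue (PhiS F)"
  proof -
    have dec: "antimono_on UNIV (\<lambda>k. PhiS (nbhd F k))"
      using nbhd_decseq[of F] unfolding monotone_on_def PhiS_def by blast
    have "(\<lambda>k. measure unit_lebesgue (PhiS (nbhd F k))) \<longlonglongrightarrow> measure unit_lebesgue (\<Inter>k. PhiS (nbhd F k))"
      by (rule UL.finite_Lim_measure_decseq) (auto intro: PhiS_sets nbhd_sets[OF FM] dec)
    moreover have "(\<Inter>k. PhiS (nbhd F k)) = PhiS F"
      using nbhd_Inter[OF F] unfolding PhiS_def by blast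
    ultimately show ?thesis by simp
  qed
  have "measure unit_lebesgue (PhiS F) \<le> measure \<mu> F"
    using lim1 closed_le1[OF F] by (intro LIMSEQ_le_const) auto
  moreover have "measure \<mu> F \<le> measure unit_lebesgue (PhiS F)"
    using lim2 closed_le2[OF F] by (intro LIMSEQ_le_const) auto
  ultimately show ?thesis by simp
qed

lemma open_eq: assumes U: "openin mtopology U"
  shows "emeasure unit_lebesgue (PhiS U) = emeasure \<mu> U"
proof -
  have UM: "U \<subseteq> M" using openin_subset[OF U] by simp
  have F: "closedin mtopology (M - U)" using U UM unfolding closedin_def by (simp add: Diff_Diff_Int Int_absorb1)
  have "PhiS U = space unit_lebesgue - PhiS (M - U)" by (auto simp: PhiS_def)
  then have "measure unit_lebesgue (PhiS U) = 1 - measure unit_lebesgue (PhiS (M - U))"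
    using UL.prob_compl[OF PhiS_sets[OF closed_sets[OF F]]] by simp
  also have "\<dots> = 1 - measure \<mu> (M - U)" using closed_eq[OF F] by simp
  also have "\<dots> = measure \<mu> U"
  proof -
    have "M - U = space \<mu> - U" by simp
    then show ?thesis using prob_compl[OF open_sets[OF U]] by simp
  qed
  finally show ?thesis
    using PhiS_sets[OF open_sets[OF U]] open_sets[OF U]
    by (simp add: UL.emeasure_eq_measure emeasure_eq_measure)
qed

lemma distr_phi: "distr unit_lebesgue \<mu> phi = \<mu>"
proof (rule measure_eqI_generator_eq[where E="{U. openin mtopology U}" and \<Omega>=M and A="\<lambda>_. M"])
  show "Int_stable {U. openin mtopology U}" by (auto simp: Int_stable_def openin_Int)
  show "{U. openin mtopology U} \<subseteq> Pow M" using openin_subset[of mtopology] by auto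
  fix X assume "X \<in> {U. openin mtopology U}"
  then have X: "openin mtopology X" by simp
  show "emeasure (distr unit_lebesgue \<mu> phi) X = emeasure \<mu> X"
    using open_eq[OF X] open_sets[OF X] by (simp add: emeasure_distr[OF phi_meas] PhiS_def)
next
  show "sets (distr unit_lebesgue \<mu> phi) = sigma_sets M {U. openin mtopology U}" using setsM' by simp
  show "sets \<mu> = sigma_sets M {U. openin mtopology U}" by (rule setsM')
  show "range (\<lambda>_. M) \<subseteq> {U. openin mtopology U}" by auto
  show "(\<Union>i. M) = M" by simp
  show "emeasure (distr unit_lebesgue \<mu> phi) M \<noteq> \<infinity>"
    by (simp add: emeasure_distr[OF phi_meas] UL.emeasure_eq_measure)
qed

end

lemma exists_parameter: assumes "mm_space X" shows "\<exists>\<phi>. parameter X \<phi>"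
proof -
  obtain d \<mu> where X: "X = (d, \<mu>)" by (cases X)
  have mm: "mm_space (d, \<mu>)" using assms unfolding X .
  interpret mmsp "space \<mu>" d \<mu> by (rule mm_space_mmsp[OF mm])
  have "parameter (d, \<mu>) phi" unfolding parameter_def snd_conv by (rule conjI[OF phi_meas distr_phi])
  then show ?thesis unfolding X by blast
qed


lemma mm_diam_nonneg: assumes "mm_space (d, \<mu>)" shows "0 \<le> mm_diam (d, \<mu>) A"
proof -
  define M where "M = space \<mu>"
  interpret mmsp M d \<mu> using mm_space_mmsp[OF assms] unfolding M_def .
  show ?thesis
  proof (cases "A = {}")
    case True then show ?thesis by (simp add: mm_diam_def)
  next
    case False
    then obtain a where a: "a \<in> A" by blast
    have "(0::ereal) \<le> ereal (d a a)" by simp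
    also have "\<dots> \<le> (SUP p\<in>A \<times> A. ereal (fst (d, \<mu>) (fst p) (snd p)))"
      using a by (intro SUP_upper2[of "(a, a)"]) auto
    finally show ?thesis using False by (simp add: mm_diam_def)
  qed
qed

lemma pd_nonneg: assumes "mm_space (d, \<mu>)" shows "0 \<le> partial_diam (d, \<mu>) s"
  unfolding partial_diam_def using mm_diam_nonneg[OF assms] by (intro INF_greatest) auto

lemma pd_mono: "s \<le> s' \<Longrightarrow> partial_diam Z s \<le> partial_diam Z s'"
  unfolding partial_diam_def by (rule INF_superset_mono) auto

lemma pd_nonpos: assumes "mm_space (d, \<mu>)" "s \<le> 0" shows "partial_diam (d, \<mu>) s = 0"
proof (rule antisym)
  have "{} \<in> {A. A \<in> sets (snd (d, \<mu>)) \<and> measure (snd (d, \<mu>)) A \<ge> s}" using assms(2) by simp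
  then have "partial_diam (d, \<mu>) s \<le> mm_diam (d, \<mu>) {}" unfolding partial_diam_def by (rule INF_lower)
  then show "partial_diam (d, \<mu>) s \<le> 0" by (simp add: mm_diam_def)
  show "0 \<le> partial_diam (d, \<mu>) s" by (rule pd_nonneg[OF assms(1)])
qed

lemma mm_diam_le: assumes "\<And>x y. x \<in> A \<Longrightarrow> y \<in> A \<Longrightarrow> d x y \<le> D" "0 \<le> D"
  shows "mm_diam (d, \<mu>) A \<le> ereal D"
proof (cases "A = {}")
  case True then show ?thesis using assms(2) by (simp add: mm_diam_def)
next
  case False
  have "(SUP p\<in>A \<times> A. ereal (fst (d, \<mu>) (fst p) (snd p))) \<le> ereal D"
    using assms(1) by (intro SUP_least) auto
  then show ?thesis using False by (simp add: mm_diam_def)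
qed

lemma mm_diam_ge: assumes "x \<in> A" "y \<in> A" shows "ereal (d x y) \<le> mm_diam (d, \<mu>) A"
proof -
  have "A \<noteq> {}" using assms by auto
  have "ereal (d x y) \<le> (SUP p\<in>A \<times> A. ereal (fst (d, \<mu>) (fst p) (snd p)))"
    using assms by (intro SUP_upper2[of "(x, y)"]) auto
  then show ?thesis using \<open>A \<noteq> {}\<close> by (simp add: mm_diam_def)
qed

lemma pd_finite: assumes mm: "mm_space (d, \<mu>)" and s: "s < 1" shows "partial_diam (d, \<mu>) s < \<infinity>"
proof -
  define M where "M = space \<mu>"
  interpret mmsp M d \<mu> using mm_space_mmsp[OF mm] unfolding M_def .
  obtain x0 where x0: "x0 \<in> M" using M_ne by blast
  define B where "B n = mball x0 (real n)" for n
  have Bs: "range B \<subseteq> sets \<mu>" unfolding B_def using open_sets[OF openin_mball] by blast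
  have Binc: "incseq B" unfolding B_def incseq_def by (auto intro!: mball_subset_concentric)
  have BU: "(\<Union>n. B n) = M"
  proof
    show "(\<Union>n. B n) \<subseteq> M" unfolding B_def using mball_subset_mspace by blast
    show "M \<subseteq> (\<Union>n. B n)"
    proof
      fix x assume x: "x \<in> M"
      obtain n where "d x0 x < real n" using reals_Archimedean2 by blast
      then show "x \<in> (\<Union>n. B n)" unfolding B_def using x x0 by auto
    qed
  qed
  have "(\<lambda>n. measure \<mu> (B n)) \<longlonglongrightarrow> measure \<mu> (\<Union>n. B n)"
    by (rule finite_Lim_measure_incseq[OF Bs Binc])
  then have "(\<lambda>n. measure \<mu> (B n)) \<longlonglongrightarrow> 1" using BU prob_space spaceM by simp
  then have "eventually (\<lambda>n. s < measure \<mu> (B n)) sequentially" using s by (rule order_tendstoD(1))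
  then obtain n where n: "s < measure \<mu> (B n)" by (meson eventually_sequentially order.refl)
  have "B n \<in> {A. A \<in> sets (snd (d, \<mu>)) \<and> measure (snd (d, \<mu>)) A \<ge> s}" using n Bs by auto
  then have "partial_diam (d, \<mu>) s \<le> mm_diam (d, \<mu>) (B n)" unfolding partial_diam_def by (rule INF_lower)
  also have "\<dots> \<le> ereal (2 * real n)"
  proof (rule mm_diam_le)
    fix x y assume "x \<in> B n" "y \<in> B n"
    then have "x \<in> M" "y \<in> M" "d x0 x < real n" "d x0 y < real n" by (auto simp: B_def)
    then have "d x y \<le> d x0 x + d x0 y" using x0 by (metis triangle'')
    then show "d x y \<le> 2 * real n" using \<open>d x0 x < real n\<close> \<open>d x0 y < real n\<close> by linarith
  qed simp
  finally have "partial_diam (d, \<mu>) s \<le> ereal (2 * real n)" .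
  then show ?thesis by (rule le_less_trans) simp
qed


lemma cmp_set:
  assumes mmY: "mm_space (dY, \<mu>Y)" and mmX: "mm_space (dX, \<mu>X)"
    and pY: "parameter (dY, \<mu>Y) \<phi>" and pX: "parameter (dX, \<mu>X) \<psi>"
    and I0: "I0 \<in> sets unit_lebesgue" "measure unit_lebesgue I0 \<ge> 1 - \<epsilon>"
    and cl: "\<forall>s\<in>I0. \<forall>t\<in>I0. \<bar>dY (\<phi> s) (\<phi> t) - dX (\<psi> s) (\<psi> t)\<bar> \<le> \<epsilon>"
    and eps: "0 \<le> \<epsilon>"
    and A: "A \<in> sets \<mu>X" "measure \<mu>X A \<ge> s + \<epsilon>" and s: "0 < s"
  shows "partial_diam (dY, \<mu>Y) s \<le> mm_diam (dX, \<mu>X) A + ereal \<epsilon>"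
proof (cases "mm_diam (dX, \<mu>X) A = \<infinity>")
  case True
  then show ?thesis by simp
next
  case False
  define MY where "MY = space \<mu>Y"
  interpret Y: mmsp MY dY \<mu>Y using mm_space_mmsp[OF mmY] unfolding MY_def .
  have nn: "0 \<le> mm_diam (dX, \<mu>X) A" by (rule mm_diam_nonneg[OF mmX])
  then obtain D where D: "mm_diam (dX, \<mu>X) A = ereal D" using False by (cases "mm_diam (dX, \<mu>X) A") auto
  have D0: "0 \<le> D" using nn D by simp
  have Db: "dX x y \<le> D" if "x \<in> A" "y \<in> A" for x y
    using mm_diam_ge[OF that, of dX \<mu>X] D by simp
  have phim: "\<phi> \<in> measurable unit_lebesgue \<mu>Y" and phid: "distr unit_lebesgue \<mu>Y \<phi> = \<mu>Y"
    using pY unfolding parameter_def by auto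
  have psim: "\<psi> \<in> measurable unit_lebesgue \<mu>X" and psid: "distr unit_lebesgue \<mu>X \<psi> = \<mu>X"
    using pX unfolding parameter_def by auto
  have I0sub: "I0 \<subseteq> {0..<1}" using I0(1) unfolding sets_UL by simp
  define PA where "PA = \<psi> -` A \<inter> space unit_lebesgue"
  have PAs: "PA \<in> sets unit_lebesgue" unfolding PA_def using measurable_sets[OF psim A(1)] .
  have mPA: "measure unit_lebesgue PA = measure \<mu>X A"
    using measure_distr[OF psim A(1)] psid unfolding PA_def by simp
  define T where "T = PA \<inter> I0"
  have Ts: "T \<in> sets unit_lebesgue" unfolding T_def using PAs I0(1) by auto
  have compl: "space unit_lebesgue - I0 \<in> sets unit_lebesgue" using sets.compl_sets[OF I0(1)] .
  have sub: "PA \<subseteq> T \<union> (space unit_lebesgue - I0)" by (auto simp: T_def PA_def)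
  have un: "T \<union> (space unit_lebesgue - I0) \<in> sets unit_lebesgue" by (rule sets.Un[OF Ts compl])
  have "measure unit_lebesgue PA \<le> measure unit_lebesgue (T \<union> (space unit_lebesgue - I0))"
    by (rule UL.finite_measure_mono[OF sub un])
  also have "\<dots> \<le> measure unit_lebesgue T + measure unit_lebesgue (space unit_lebesgue - I0)"
    by (rule measure_Un_le[OF Ts compl])
  also have "measure unit_lebesgue (space unit_lebesgue - I0) = 1 - measure unit_lebesgue I0"
    by (rule UL.prob_compl[OF I0(1)])
  finally have mT: "measure unit_lebesgue T \<ge> s" using mPA A(2) I0(2) by linarith
  define B where "B = Y.mtopology closure_of (\<phi> ` T)"
  have phiT: "\<phi> ` T \<subseteq> MY"
  proof -
    have "\<phi> ` space unit_lebesgue \<subseteq> space \<mu>Y" using measurable_space[OF phim] by blast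
    moreover have "T \<subseteq> space unit_lebesgue" using Ts sets.sets_into_space by blast
    ultimately show ?thesis unfolding MY_def by blast
  qed
  have Bs: "B \<in> sets \<mu>Y" unfolding B_def by (rule Y.closed_sets[OF closedin_closure_of])
  have TB: "T \<subseteq> \<phi> -` B \<inter> space unit_lebesgue"
  proof -
    have "\<phi> ` T \<subseteq> B" unfolding B_def using closure_of_subset[of "\<phi> ` T" Y.mtopology] phiT by simp
    moreover have "T \<subseteq> space unit_lebesgue" using Ts sets.sets_into_space by blast
    ultimately show ?thesis by blast
  qed
  have "s \<le> measure unit_lebesgue T" by (rule mT)
  also have "\<dots> \<le> measure unit_lebesgue (\<phi> -` B \<inter> space unit_lebesgue)"
    using TB measurable_sets[OF phim Bs] by (intro UL.finite_measure_mono)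
  also have "\<dots> = measure \<mu>Y B" using measure_distr[OF phim Bs] phid by simp
  finally have mB: "s \<le> measure \<mu>Y B" .
  have "partial_diam (dY, \<mu>Y) s \<le> mm_diam (dY, \<mu>Y) B"
    unfolding partial_diam_def using Bs mB by (intro INF_lower) simp
  also have "\<dots> \<le> ereal (D + \<epsilon>)"
  proof (rule mm_diam_le)
    show "0 \<le> D + \<epsilon>" using D0 eps by simp
    fix x y assume x: "x \<in> B" and y: "y \<in> B"
    have xM: "x \<in> MY" and yM: "y \<in> MY" using x y unfolding B_def Y.metric_closure_of by auto
    show "dY x y \<le> D + \<epsilon>"
    proof (rule field_le_epsilon)
      fix e :: real assume e: "0 < e"
      then have e2: "0 < e / 2" by simp
      obtain u where u: "u \<in> \<phi> ` T" "u \<in> Y.mball x (e/2)"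
        using x e2 unfolding B_def Y.metric_closure_of by blast
      obtain v where v: "v \<in> \<phi> ` T" "v \<in> Y.mball y (e/2)"
        using y e2 unfolding B_def Y.metric_closure_of by blast
      obtain s1 where s1: "s1 \<in> T" "u = \<phi> s1" using u(1) by blast
      obtain s2 where s2: "s2 \<in> T" "v = \<phi> s2" using v(1) by blast
      have s12: "s1 \<in> I0" "s2 \<in> I0" "\<psi> s1 \<in> A" "\<psi> s2 \<in> A"
        using s1(1) s2(1) unfolding T_def PA_def by auto
      have "\<bar>dY (\<phi> s1) (\<phi> s2) - dX (\<psi> s1) (\<psi> s2)\<bar> \<le> \<epsilon>" using cl s12(1,2) by blast
      moreover have "dX (\<psi> s1) (\<psi> s2) \<le> D" using Db s12(3,4) by blast
      ultimately have uv: "dY u v \<le> D + \<epsilon>" unfolding s1(2) s2(2) by linarith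
      have uM: "u \<in> MY" and vM: "v \<in> MY" using u(2) v(2) by auto
      have xu: "dY x u < e / 2" and yv: "dY y v < e / 2" using u(2) v(2) by auto
      have "dY x y \<le> dY x u + dY u y" using xM uM yM by (rule Y.triangle)
      also have "dY u y \<le> dY u v + dY v y" using uM vM yM by (rule Y.triangle)
      also have "dY v y = dY y v" by (rule Y.commute)
      finally show "dY x y \<le> D + \<epsilon> + e" using uv xu yv by linarith
    qed
  qed
  also have "\<dots> = mm_diam (dX, \<mu>X) A + ereal \<epsilon>" using D by simp
  finally show ?thesis .
qed

lemma cmp:
  assumes mmY: "mm_space (dY, \<mu>Y)" and mmX: "mm_space (dX, \<mu>X)"
    and pY: "parameter (dY, \<mu>Y) \<phi>" and pX: "parameter (dX, \<mu>X) \<psi>"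
    and I0: "I0 \<in> sets unit_lebesgue" "measure unit_lebesgue I0 \<ge> 1 - \<epsilon>"
    and cl: "\<forall>s\<in>I0. \<forall>t\<in>I0. \<bar>dY (\<phi> s) (\<phi> t) - dX (\<psi> s) (\<psi> t)\<bar> \<le> \<epsilon>"
    and eps: "0 \<le> \<epsilon>"
  shows "partial_diam (dY, \<mu>Y) s \<le> partial_diam (dX, \<mu>X) (s + \<epsilon>) + ereal \<epsilon>"
proof (cases "s \<le> 0")
  case True
  then have "partial_diam (dY, \<mu>Y) s = 0" by (rule pd_nonpos[OF mmY])
  moreover have "0 \<le> partial_diam (dX, \<mu>X) (s + \<epsilon>)" by (rule pd_nonneg[OF mmX])
  ultimately show ?thesis using eps by simp
next
  case False
  then have s: "0 < s" by simp
  define AA where "AA = {A. A \<in> sets \<mu>X \<and> measure \<mu>X A \<ge> s + \<epsilon>}"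
  have pdX: "partial_diam (dX, \<mu>X) (s + \<epsilon>) = (INF A\<in>AA. mm_diam (dX, \<mu>X) A)"
    unfolding partial_diam_def AA_def by simp
  show ?thesis
  proof (cases "AA = {}")
    case True
    then show ?thesis unfolding pdX by (simp add: top_ereal_def)
  next
    case False
    have "partial_diam (dY, \<mu>Y) s \<le> (INF A\<in>AA. mm_diam (dX, \<mu>X) A + ereal \<epsilon>)"
    proof (rule INF_greatest)
      fix A assume "A \<in> AA"
      then have A: "A \<in> sets \<mu>X" "measure \<mu>X A \<ge> s + \<epsilon>" unfolding AA_def by auto
      show "partial_diam (dY, \<mu>Y) s \<le> mm_diam (dX, \<mu>X) A + ereal \<epsilon>"
        by (rule cmp_set[OF mmY mmX pY pX I0 cl eps A s])
    qed
    also have "\<dots> = (INF A\<in>AA. mm_diam (dX, \<mu>X) A) + ereal \<epsilon>"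
      using False mm_diam_nonneg[OF mmX] by (intro INF_ereal_add_left) auto
    finally show ?thesis unfolding pdX .
  qed
qed


lemma box_witness:
  assumes mmY: "mm_space (dY, \<mu>Y)" and mmX: "mm_space (dX, \<mu>X)" and lt: "box_dist (dY, \<mu>Y) (dX, \<mu>X) < \<delta>"
  shows "\<exists>\<epsilon> \<phi> \<psi> I0. 0 \<le> \<epsilon> \<and> \<epsilon> < \<delta> \<and> parameter (dY, \<mu>Y) \<phi> \<and> parameter (dX, \<mu>X) \<psi> \<and>
       I0 \<in> sets unit_lebesgue \<and> measure unit_lebesgue I0 \<ge> 1 - \<epsilon> \<and>
       (\<forall>s\<in>I0. \<forall>t\<in>I0. \<bar>dY (\<phi> s) (\<phi> t) - dX (\<psi> s) (\<psi> t)\<bar> \<le> \<epsilon>)"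
proof -
  define S where "S = {\<epsilon>. \<epsilon> \<ge> 0 \<and> (\<exists>\<phi> \<psi> I0. parameter (dY, \<mu>Y) \<phi> \<and> parameter (dX, \<mu>X) \<psi> \<and>
       I0 \<in> sets unit_lebesgue \<and> measure unit_lebesgue I0 \<ge> 1 - \<epsilon> \<and>
       (\<forall>s\<in>I0. \<forall>t\<in>I0. \<bar>fst (dY, \<mu>Y) (\<phi> s) (\<phi> t) - fst (dX, \<mu>X) (\<psi> s) (\<psi> t)\<bar> \<le> \<epsilon>))}"
  have bd: "box_dist (dY, \<mu>Y) (dX, \<mu>X) = Inf S" unfolding box_dist_def S_def ..
  obtain \<phi>0 where p0: "parameter (dY, \<mu>Y) \<phi>0" using exists_parameter[OF mmY] by blast
  obtain \<psi>0 where q0: "parameter (dX, \<mu>X) \<psi>0" using exists_parameter[OF mmX] by blast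
  have "(1::real) \<in> S" unfolding S_def using p0 q0 by (intro CollectI conjI) (auto intro!: exI[where x="{}"])
  then have "S \<noteq> {}" by blast
  then obtain \<epsilon> where e: "\<epsilon> \<in> S" "\<epsilon> < \<delta>" using cInf_lessD[of S \<delta>] lt bd by auto
  then show ?thesis unfolding S_def by auto
qed

lemma close_ev:
  assumes mmX: "mm_space (dX, \<mu>X)" and mmY: "\<And>n. mm_space (Y n)"
    and lim: "(\<lambda>n. box_dist (Y n) (dX, \<mu>X)) \<longlonglongrightarrow> 0" and \<delta>: "\<delta> > 0"
  shows "eventually (\<lambda>n. \<forall>s. partial_diam (Y n) s \<le> partial_diam (dX, \<mu>X) (s + \<delta>) + ereal \<delta> \<and>
                            partial_diam (dX, \<mu>X) s \<le> partial_diam (Y n) (s + \<delta>) + ereal \<delta>) sequentially"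
proof -
  have "eventually (\<lambda>n. box_dist (Y n) (dX, \<mu>X) < \<delta>) sequentially"
    using lim \<delta> by (rule order_tendstoD(2))
  then show ?thesis
  proof (rule eventually_mono)
    fix n assume lt: "box_dist (Y n) (dX, \<mu>X) < \<delta>"
    obtain dY \<mu>Y where Yn: "Y n = (dY, \<mu>Y)" by (cases "Y n")
    have mmYn: "mm_space (dY, \<mu>Y)" using mmY[of n] unfolding Yn .
    obtain \<epsilon> \<phi> \<psi> I0 where W: "0 \<le> \<epsilon>" "\<epsilon> < \<delta>" "parameter (dY, \<mu>Y) \<phi>" "parameter (dX, \<mu>X) \<psi>"
       "I0 \<in> sets unit_lebesgue" "measure unit_lebesgue I0 \<ge> 1 - \<epsilon>"
       "\<forall>s\<in>I0. \<forall>t\<in>I0. \<bar>dY (\<phi> s) (\<phi> t) - dX (\<psi> s) (\<psi> t)\<bar> \<le> \<epsilon>"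
      using box_witness[OF mmYn mmX, of \<delta>] lt unfolding Yn by blast
    have W': "\<forall>s\<in>I0. \<forall>t\<in>I0. \<bar>dX (\<psi> s) (\<psi> t) - dY (\<phi> s) (\<phi> t)\<bar> \<le> \<epsilon>"
      using W(7) by (simp add: abs_minus_commute)
    show "\<forall>s. partial_diam (Y n) s \<le> partial_diam (dX, \<mu>X) (s + \<delta>) + ereal \<delta> \<and>
              partial_diam (dX, \<mu>X) s \<le> partial_diam (Y n) (s + \<delta>) + ereal \<delta>"
    proof
      fix s
      have 1: "partial_diam (dY, \<mu>Y) s \<le> partial_diam (dX, \<mu>X) (s + \<epsilon>) + ereal \<epsilon>"
        by (rule cmp[OF mmYn mmX W(3) W(4) W(5) W(6) W(7) W(1)])
      have 2: "partial_diam (dX, \<mu>X) s \<le> partial_diam (dY, \<mu>Y) (s + \<epsilon>) + ereal \<epsilon>"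
        by (rule cmp[OF mmX mmYn W(4) W(3) W(5) W(6) W' W(1)])
      have 3: "partial_diam (dX, \<mu>X) (s + \<epsilon>) + ereal \<epsilon> \<le> partial_diam (dX, \<mu>X) (s + \<delta>) + ereal \<delta>"
        using W(2) by (intro add_mono pd_mono) auto
      have 4: "partial_diam (dY, \<mu>Y) (s + \<epsilon>) + ereal \<epsilon> \<le> partial_diam (dY, \<mu>Y) (s + \<delta>) + ereal \<delta>"
        using W(2) by (intro add_mono pd_mono) auto
      show "partial_diam (Y n) s \<le> partial_diam (dX, \<mu>X) (s + \<delta>) + ereal \<delta> \<and>
              partial_diam (dX, \<mu>X) s \<le> partial_diam (Y n) (s + \<delta>) + ereal \<delta>"
        unfolding Yn using order.trans[OF 1 3] order.trans[OF 2 4] by blast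
    qed
  qed
qed


theorem lemma3p8:
  fixes \<Delta> :: real and X :: "'a mmspace" and Y :: "nat \<Rightarrow> 'b mmspace"
  assumes "0 < \<Delta>" and "\<Delta> < 1"
    and "mm_space_Delta \<Delta> X"
    and "\<And>n. mm_space_Delta \<Delta> (Y n)"
    and "(\<lambda>n. box_dist (Y n) X) \<longlonglongrightarrow> 0"
  shows "(\<lambda>n. r_Delta \<Delta> (Y n)) \<longlonglongrightarrow> r_Delta \<Delta> X"
proof -
  obtain dX \<mu>X where X: "X = (dX, \<mu>X)" by (cases X)
  have mmX: "mm_space (dX, \<mu>X)" using assms(3) unfolding X mm_space_Delta_def by blast
  have mmY: "\<And>n. mm_space (Y n)" using assms(4) unfolding mm_space_Delta_def by blast
  have lim: "(\<lambda>n. box_dist (Y n) (dX, \<mu>X)) \<longlonglongrightarrow> 0" using assms(5) unfolding X .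
  define c where "c = (\<Delta> + 1) / 2"
  have c0: "0 < c" "c < 1" using assms(1,2) by (auto simp: c_def)
  define \<delta>0 where "\<delta>0 = (1 - c) / 2"
  have d0: "0 < \<delta>0" "c + \<delta>0 < 1" using c0 unfolding \<delta>0_def by (simp_all add: field_simps)
  let ?pX = "partial_diam (dX, \<mu>X)"
  define g where "g s = real_of_ereal (?pX s)" for s
  have gX: "?pX s = ereal (g s)" if "s < 1" for s
  proof -
    have "0 \<le> ?pX s" by (rule pd_nonneg[OF mmX])
    moreover have "?pX s < \<infinity>" by (rule pd_finite[OF mmX that])
    ultimately show ?thesis unfolding g_def by (cases "?pX s") auto
  qed
  have g_nonneg: "0 \<le> g s" for s
    unfolding g_def using pd_nonneg[OF mmX, of s] by (cases "?pX s") auto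
  have g_mono: "g s \<le> g s'" if "s \<le> s'" "s' < 1" for s s'
    using pd_mono[OF that(1), of "(dX, \<mu>X)"] gX[of s] gX[of s'] that by simp
  define f where "f n s = real_of_ereal (partial_diam (Y n) s)" for n s
  define Close where "Close \<delta> n \<longleftrightarrow> (\<forall>s. partial_diam (Y n) s \<le> ?pX (s + \<delta>) + ereal \<delta> \<and>
                            ?pX s \<le> partial_diam (Y n) (s + \<delta>) + ereal \<delta>)" for \<delta> n
  have ev: "eventually (Close \<delta>) sequentially" if "\<delta> > 0" for \<delta>
    unfolding Close_def by (rule close_ev[OF mmX mmY lim that])
  have fY: "partial_diam (Y n) s = ereal (f n s) \<and> 0 \<le> f n s \<and> f n s \<le> g (s + \<delta>) + \<delta>"
    if "Close \<delta> n" "s + \<delta> < 1" "\<delta> > 0" for n s \<delta>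
  proof -
    obtain dY \<mu>Y where Yn: "Y n = (dY, \<mu>Y)" by (cases "Y n")
    have mmYn: "mm_space (dY, \<mu>Y)" using mmY[of n] unfolding Yn .
    have 0: "0 \<le> partial_diam (Y n) s" unfolding Yn by (rule pd_nonneg[OF mmYn])
    have "partial_diam (Y n) s \<le> ?pX (s + \<delta>) + ereal \<delta>" using that(1) unfolding Close_def by blast
    then have 1: "partial_diam (Y n) s \<le> ereal (g (s + \<delta>) + \<delta>)"
      unfolding gX[OF that(2)] by simp
    show ?thesis using 0 1 unfolding f_def by (cases "partial_diam (Y n) s") auto
  qed
  have fY2: "g (s - \<delta>) \<le> f n s + \<delta>" if "Close \<delta> n" "s + \<delta> < 1" "\<delta> > 0" for n s \<delta>
  proof -
    have "?pX (s - \<delta>) \<le> partial_diam (Y n) (s - \<delta> + \<delta>) + ereal \<delta>"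
      using that(1) unfolding Close_def by blast
    then have "ereal (g (s - \<delta>)) \<le> ereal (f n s) + ereal \<delta>"
      using gX[of "s - \<delta>"] fY[OF that] that by simp
    then show ?thesis by simp
  qed
  have pw: "(\<lambda>n. f n s) \<longlonglongrightarrow> g s" if s: "s \<in> {0<..<c}" "isCont g s" for s
  proof (rule LIMSEQ_I)
    fix \<eta> :: real assume \<eta>: "0 < \<eta>"
    then have "\<eta> / 2 > 0" by simp
    then obtain \<delta>' where d': "\<delta>' > 0" "\<And>x'. dist x' s < \<delta>' \<Longrightarrow> dist (g x') (g s) < \<eta> / 2"
      using s(2) unfolding continuous_at_eps_delta by blast
    define \<delta> where "\<delta> = min (\<delta>' / 2) (min (\<eta> / 2) \<delta>0)"
    have dpos: "\<delta> > 0" using d' \<eta> d0 by (simp add: \<delta>_def)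
    have dle: "\<delta> < \<delta>'" "\<delta> \<le> \<eta> / 2" "\<delta> \<le> \<delta>0" using d' by (auto simp: \<delta>_def)
    have sd: "s + \<delta> < 1" using s(1) dle(3) d0 by simp
    have g1: "\<bar>g (s + \<delta>) - g s\<bar> < \<eta> / 2" using d'(2)[of "s + \<delta>"] dle dpos by (simp add: dist_real_def)
    have g2: "\<bar>g (s - \<delta>) - g s\<bar> < \<eta> / 2" using d'(2)[of "s - \<delta>"] dle dpos by (simp add: dist_real_def)
    obtain N where N: "\<And>n. n \<ge> N \<Longrightarrow> Close \<delta> n"
      using ev[OF dpos] unfolding eventually_sequentially by blast
    have "norm (f n s - g s) < \<eta>" if "n \<ge> N" for n
    proof -
      have a: "f n s \<le> g (s + \<delta>) + \<delta>" using fY[OF N[OF that] sd dpos] by blast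
      have b: "g (s - \<delta>) \<le> f n s + \<delta>" using fY2[OF N[OF that] sd dpos] .
      have g1': "g (s + \<delta>) < g s + \<eta> / 2" using g1 unfolding abs_less_iff by linarith
      have g2': "g s - \<eta> / 2 < g (s - \<delta>)" using g2 unfolding abs_less_iff by linarith
      have "f n s - g s < \<eta>" "g s - f n s < \<eta>" using a b g1' g2' dle(2) by linarith+
      then show ?thesis unfolding real_norm_def abs_less_iff by linarith
    qed
    then show "\<exists>no. \<forall>n\<ge>no. norm (f n s - g s) < \<eta>" by blast
  qed
  obtain N0 where N0: "\<And>n. n \<ge> N0 \<Longrightarrow> Close \<delta>0 n"
    using ev[OF d0(1)] unfolding eventually_sequentially by blast
  define Bd where "Bd = g (c + \<delta>0) + \<delta>0"
  have fb: "0 \<le> f n s \<and> f n s \<le> Bd" if "n \<ge> N0" "s \<le> c" for n s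
  proof -
    have "s + \<delta>0 < 1" using that(2) d0 by simp
    then have "0 \<le> f n s \<and> f n s \<le> g (s + \<delta>0) + \<delta>0" using fY[OF N0[OF that(1)] _ d0(1)] by blast
    moreover have "g (s + \<delta>0) \<le> g (c + \<delta>0)" using g_mono that(2) d0 by simp
    ultimately show ?thesis unfolding Bd_def by linarith
  qed
  have f_mono: "f n s \<le> f n s'" if "n \<ge> N0" "s \<le> s'" "s' \<le> c" for n s s'
  proof -
    have "s + \<delta>0 < 1" "s' + \<delta>0 < 1" using that d0 by auto
    then have "partial_diam (Y n) s = ereal (f n s)" "partial_diam (Y n) s' = ereal (f n s')"
      using fY[OF N0[OF that(1)] _ d0(1)] by blast+
    then show ?thesis using pd_mono[OF that(2), of "Y n"] by simp
  qed
  define I where "I = {0<..<c}"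
  have mf: "(\<lambda>x. indicator I x *\<^sub>R f (i + N0) x) \<in> borel_measurable lborel" for i
  proof -
    define h where "h x = f (i + N0) (min x c)" for x
    have "mono h" unfolding h_def mono_def by (intro allI impI f_mono) auto
    then have hm: "h \<in> borel_measurable borel" by (rule borel_measurable_mono)
    have eq: "(\<lambda>x. indicator I x *\<^sub>R f (i + N0) x) = (\<lambda>x. indicator I x * h x)"
      by (rule ext) (auto simp: h_def I_def indicator_def)
    show ?thesis unfolding eq measurable_cong_sets[OF sets_lborel refl]
      using hm by (intro borel_measurable_times borel_measurable_indicator) (auto simp: I_def)
  qed
  have mg: "(\<lambda>x. indicator I x *\<^sub>R g x) \<in> borel_measurable lborel"
  proof -
    define h where "h x = g (min x c)" for x
    have "mono h" unfolding h_def mono_def using c0 by (intro allI impI g_mono) auto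
    then have hm: "h \<in> borel_measurable borel" by (rule borel_measurable_mono)
    have eq: "(\<lambda>x. indicator I x *\<^sub>R g x) = (\<lambda>x. indicator I x * h x)"
      by (rule ext) (auto simp: h_def I_def indicator_def)
    show ?thesis unfolding eq measurable_cong_sets[OF sets_lborel refl]
      using hm by (intro borel_measurable_times borel_measurable_indicator) (auto simp: I_def)
  qed
  have DC: "(\<lambda>i. integral\<^sup>L lborel (\<lambda>x. indicator I x *\<^sub>R f (i + N0) x)) \<longlonglongrightarrow> integral\<^sup>L lborel (\<lambda>x. indicator I x *\<^sub>R g x)"
  proof (rule integral_dominated_convergence[where w="\<lambda>x. indicator I x * Bd"])
    show "(\<lambda>x. indicator I x *\<^sub>R g x) \<in> borel_measurable lborel" by (rule mg)
    show "(\<lambda>x. indicator I x *\<^sub>R f (i + N0) x) \<in> borel_measurable lborel" for i by (rule mf)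
    have "integrable lborel (indicator I :: real \<Rightarrow> real)"
      unfolding I_def using c0 by (intro integrable_real_indicator) auto
    then show "integrable lborel (\<lambda>x. indicator I x * Bd)" by (rule integrable_mult_left)
    show "AE x in lborel. norm (indicator I x *\<^sub>R f (i + N0) x) \<le> indicator I x * Bd" for i
    proof (rule AE_I2)
      fix x
      show "norm (indicator I x *\<^sub>R f (i + N0) x) \<le> indicator I x * Bd"
      proof (cases "x \<in> I")
        case True
        then have "x \<le> c" by (simp add: I_def)
        then show ?thesis using fb[of "i + N0" x] True by simp
      qed simp
    qed
    define D where "D = {a \<in> {..<1::real}. \<not> isCont g a}"
    have "mono_on {..<1} g" unfolding monotone_on_def using g_mono by auto
    then have "countable D" unfolding D_def by (intro mono_on_ctble_discont_open) auto
    then have "D \<in> null_sets lborel" by (rule countable_imp_null_set_lborel)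
    then have "AE x in lborel. x \<notin> D" by (rule AE_not_in)
    then show "AE x in lborel. (\<lambda>i. indicator I x *\<^sub>R f (i + N0) x) \<longlonglongrightarrow> indicator I x *\<^sub>R g x"
    proof (rule AE_mp[OF _ AE_I2], intro impI)
      fix x assume xD: "x \<notin> D"
      show "(\<lambda>i. indicator I x *\<^sub>R f (i + N0) x) \<longlonglongrightarrow> indicator I x *\<^sub>R g x"
      proof (cases "x \<in> I")
        case True
        then have "x < 1" using c0 by (simp add: I_def)
        then have "isCont g x" using xD by (simp add: D_def)
        then have "(\<lambda>n. f n x) \<longlonglongrightarrow> g x" using pw True unfolding I_def by blast
        then have "(\<lambda>i. f (i + N0) x) \<longlonglongrightarrow> g x" by (rule LIMSEQ_ignore_initial_segment)
        then show ?thesis using True by simp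
      qed simp
    qed
  qed
  have rD: "r_Delta \<Delta> Z = integral\<^sup>L lborel (\<lambda>x. indicator I x *\<^sub>R real_of_ereal (partial_diam Z x))" for Z :: "'c mmspace"
  proof -
    have le: "(0::ereal) \<le> ereal c" using c0 by simp
    have ei: "einterval 0 (ereal c) = I" using einterval_eq(1)[of 0 c] unfolding I_def zero_ereal_def .
    show ?thesis unfolding r_Delta_def c_def[symmetric] interval_lebesgue_integral_def set_lebesgue_integral_def
      by (simp only: le if_True ei)
  qed
  have "(\<lambda>i. r_Delta \<Delta> (Y (i + N0))) \<longlonglongrightarrow> r_Delta \<Delta> X"
    using DC unfolding rD f_def g_def X .
  then show ?thesis by (rule LIMSEQ_offset)
qed


end
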